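(* Let $n\geq 1$ be an integer, let $\mu\in\mathbb{C}$ with $\mu\neq 0$ and $\operatorname{Re}(\mu)<n$, and let $\lambda\in\mathbb{C}$ with $0<|\lambda|\leq 1$. Suppose $p\in\mathcal{H}[1,n]$ satisfies $$p(z)-\frac{1}{\mu}\,z p'(z)\prec 1+\lambda z \qquad (z\in\mathbb{U}).$$ Then $p(z)\prec 1+\lambda_1 z$ $(z\in\mathbb{U})$ for every complex number $\lambda_1$ with $$|\lambda_1|=|\lambda|\,\frac{|\mu|}{|n-\mu|};$$ equivalently, $|p(z)-1|<|\lambda|\,|\mu|/|n-\mu|$ for all $z\in\mathbb{U}$.
   Context: $\mathbb{U}=\{z\in\mathbb{C}:|z|<1\}$. For $a_0\in\mathbb{C}$ and an integer $n\geq1$, $\mathcal{H}[a_0,n]$ denotes the class of functions analytic in $\mathbb{U}$ of the form $p(z)=a_0+\sum_{k=n}^\infty a_k z^k$. For $f,g$ analytic in $\mathbb{U}$, $f\prec g$ ($f$ is subordinate to $g$) means there is an analytic $w$ in $\mathbb{U}$ with $w(0)=0$, $|w(z)|<1$ on $\mathbb{U}$, and $f(z)=g(w(z))$; when $g$ is univalent this is equivalent to $f(0)=g(0)$ and $f(\mathbb{U})\subset g(\mathbb{U})$. In particular, for $\lambda\neq 0$, $q\prec 1+\lambda z$ means $q(0)=1$ and $|q(z)-1|<|\lambda|$ on $\mathbb{U}$. *)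

theory Defs
  imports "HOL-Analysis.Analysis"
begin

definition Hclass :: "complex \<Rightarrow> nat \<Rightarrow> (complex \<Rightarrow> complex) set" where
  "Hclass a0 n = {p. p holomorphic_on ball 0 1 \<and>
     (\<exists>a::nat \<Rightarrow> complex. (\<forall>k<n. a k = 0) \<and>
        (\<forall>z\<in>ball 0 1. (\<lambda>k. a k * z ^ k) sums (p z - a0)))}"

definition subordinate :: "(complex \<Rightarrow> complex) \<Rightarrow> (complex \<Rightarrow> complex) \<Rightarrow> bool" where
  "subordinate f g \<longleftrightarrow> (\<exists>w. w holomorphic_on ball 0 1 \<and> w 0 = 0 \<and>
     (\<forall>z\<in>ball 0 1. norm (w z) < 1 \<and> f z = g (w z)))"

end

theory Submission
  imports Defs
begin

lemma e2pi: "exp (\<i> * (2 * complex_of_real pi)) = 1"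
  by (metis exp_two_pi_i' mult.commute)

lemma mean_value:
  fixes H H' :: "complex \<Rightarrow> complex"
  assumes D: "\<And>z. z \<in> ball 0 \<rho>2 \<Longrightarrow> (H has_field_derivative H' z) (at z)"
    and C: "continuous_on (ball 0 \<rho>2) H'"
    and r0: "0 \<le> \<rho>" and r1: "\<rho> < \<rho>2"
  shows "integral {0..2*pi} (\<lambda>\<theta>. H (of_real \<rho> * exp (\<i> * of_real \<theta>))) = 2 * pi * H 0"
proof -
  define e where "e \<theta> = exp (\<i> * of_real \<theta>)" for \<theta> :: real
  have ne: "norm (e \<theta>) = 1" for \<theta> by (simp add: e_def)
  define U where "U = {0..\<rho>}"
  have inball: "of_real t * e \<theta> \<in> ball 0 \<rho>2" if "t \<in> U" for t \<theta>
    using that r1 by (simp add: U_def ne norm_mult)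
  have Hc: "continuous_on (ball 0 \<rho>2) H"
    using D by (meson DERIV_isCont continuous_at_imp_continuous_on)
  have ce: "continuous_on A e" for A by (auto simp: e_def intro!: continuous_intros)
  have de: "(e has_vector_derivative (\<i> * e \<theta>)) (at \<theta> within A)" for \<theta> A
    unfolding e_def
    by (rule has_vector_derivative_real_field) (auto intro!: derivative_eq_intros)
  define fx where "fx t \<theta> = e \<theta> * H' (of_real t * e \<theta>)" for t \<theta>
  have der: "((\<lambda>t. H (of_real t * e \<theta>)) has_vector_derivative fx t \<theta>) (at t within U)"
    if "t \<in> U" for t \<theta>
  proof -
    have "((\<lambda>s. H (s * e \<theta>)) has_field_derivative (H' (of_real t * e \<theta>) * e \<theta>)) (at (of_real t))"
      by (rule DERIV_chain2[where f=H and g="\<lambda>s. s * e \<theta>" and x="of_real t", OF D[OF inball[OF that]]])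
         (auto intro!: derivative_eq_intros)
    from has_vector_derivative_real_field[OF this, where s=U] show ?thesis
      by (simp add: fx_def mult.commute)
  qed
  have integ: "(\<lambda>\<theta>. H (of_real t * e \<theta>)) integrable_on cbox 0 (2*pi)" if "t \<in> U" for t
    by (rule integrable_continuous, rule continuous_on_compose2[OF Hc])
       (auto intro!: continuous_intros ce inball that)
  have cfx: "continuous_on (U \<times> cbox 0 (2*pi)) (\<lambda>(t, \<theta>). fx t \<theta>)"
    unfolding fx_def split_beta
    by (intro continuous_intros continuous_on_compose2[OF C] continuous_on_compose2[OF ce])
       (auto intro: inball)
  have Fd: "((\<lambda>t. integral (cbox 0 (2*pi)) (\<lambda>\<theta>. H (of_real t * e \<theta>))) has_vector_derivative
      integral (cbox 0 (2*pi)) (fx t)) (at t within U)" if "t \<in> U" for t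
    by (rule leibniz_rule_vector_derivative[OF der integ cfx that]) (auto simp: U_def)
  have z: "integral (cbox 0 (2*pi)) (fx t) = 0" if "t \<in> U" for t
  proof (cases "t = 0")
    case True
    have "((\<lambda>\<theta>. \<i> * e \<theta>) has_integral (e (2*pi) - e 0)) {0..2*pi}"
      by (rule fundamental_theorem_of_calculus) (auto intro: de)
    then have "((\<lambda>\<theta>. \<i> * e \<theta>) has_integral 0) {0..2*pi}"
      by (simp add: e_def e2pi)
    from has_integral_mult_left[OF this, of "- \<i> * H' 0"]
    have "((\<lambda>\<theta>. fx t \<theta>) has_integral 0) {0..2*pi}"
      by (simp add: fx_def True algebra_simps)
    then show ?thesis by (simp add: integral_unique)
  next
    case False
    with that have tpos: "t > 0" by (simp add: U_def)
    have dd: "((\<lambda>\<theta>. H (of_real t * e \<theta>)) has_vector_derivative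
        (H' (of_real t * e \<theta>) * (of_real t * (\<i> * e \<theta>)))) (at \<theta> within {0..2*pi})" for \<theta>
    proof -
      have d1: "(H has_field_derivative H' (of_real t * exp (\<i> * of_real \<theta>))) (at (of_real t * exp (\<i> * of_real \<theta>)))"
        using D inball that by (simp add: e_def)
      have d2: "((\<lambda>s. of_real t * exp (\<i> * s)) has_field_derivative (of_real t * (\<i> * exp (\<i> * of_real \<theta>)))) (at (of_real \<theta>))"
        by (auto intro!: derivative_eq_intros)
      from has_vector_derivative_real_field[OF DERIV_chain2[OF d1 d2], where s="{0..2*pi}"] show ?thesis
        by (simp add: e_def)
    qed
    have "((\<lambda>\<theta>. H' (of_real t * e \<theta>) * (of_real t * (\<i> * e \<theta>))) has_integral
          (H (of_real t * e (2*pi)) - H (of_real t * e 0))) {0..2*pi}"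
      by (rule fundamental_theorem_of_calculus) (auto intro: dd)
    then have "((\<lambda>\<theta>. H' (of_real t * e \<theta>) * (of_real t * (\<i> * e \<theta>))) has_integral 0) {0..2*pi}"
      by (simp add: e_def e2pi)
    note h1 = has_integral_mult_left[OF this, of "inverse (of_real t * \<i>)"]
    have h2: "(\<lambda>\<theta>. H' (of_real t * e \<theta>) * (of_real t * (\<i> * e \<theta>)) * inverse (of_real t * \<i>)) = fx t"
    proof
      fix \<theta>
      have "of_real t * (\<i> * e \<theta>) * inverse (of_real t * \<i>) = e \<theta> * (of_real t * inverse (of_real t)) * (\<i> * inverse \<i>)"
        by (simp add: mult_ac)
      also have "\<dots> = e \<theta>" using tpos by simp
      finally have eq: "of_real t * (\<i> * e \<theta>) * inverse (of_real t * \<i>) = e \<theta>" .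
      have "H' (of_real t * e \<theta>) * (of_real t * (\<i> * e \<theta>)) * inverse (of_real t * \<i>)
          = H' (of_real t * e \<theta>) * (of_real t * (\<i> * e \<theta>) * inverse (of_real t * \<i>))"
        by (rule mult.assoc)
      also have "\<dots> = fx t \<theta>" unfolding eq fx_def by (rule mult.commute)
      finally show "H' (of_real t * e \<theta>) * (of_real t * (\<i> * e \<theta>)) * inverse (of_real t * \<i>) = fx t \<theta>" .
    qed
    from h1 h2 have "((\<lambda>\<theta>. fx t \<theta>) has_integral 0) {0..2*pi}"
      by simp
    then show ?thesis by (simp add: integral_unique)
  qed
  obtain c where c: "\<And>t. t \<in> U \<Longrightarrow> integral (cbox 0 (2*pi)) (\<lambda>\<theta>. H (of_real t * e \<theta>)) = c"
    by (rule has_vector_derivative_zero_constant[of U]) (use Fd z in \<open>auto simp: U_def\<close>)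
  have "integral (cbox 0 (2*pi)) (\<lambda>\<theta>. H (of_real \<rho> * e \<theta>)) = integral (cbox 0 (2*pi)) (\<lambda>\<theta>. H (of_real 0 * e \<theta>))"
    using c[of \<rho>] c[of 0] r0 by (simp add: U_def)
  also have "\<dots> = 2 * pi * H 0" by (simp add: scaleR_conv_of_real)
  finally show ?thesis by (simp add: e_def)
qed


lemma mobius_identity:
  fixes a z :: complex
  shows "(norm (1 + cnj a * z))^2 - (norm (z + a))^2 = (1 - (norm a)^2) * (1 - (norm z)^2)"
proof -
  have "complex_of_real ((norm (1 + cnj a * z))^2 - (norm (z + a))^2) =
        (1 + cnj a * z) * cnj (1 + cnj a * z) - (z + a) * cnj (z + a)"
    by (simp only: of_real_diff complex_norm_square)
  also have "\<dots> = (1 - a * cnj a) * (1 - z * cnj z)"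
    by (simp add: algebra_simps)
  also have "\<dots> = complex_of_real ((1 - (norm a)^2) * (1 - (norm z)^2))"
    by (simp only: of_real_mult of_real_diff of_real_1 complex_norm_square)
  finally show ?thesis using of_real_eq_iff by blast
qed

lemma max_principle:
  fixes G G' :: "complex \<Rightarrow> complex"
  assumes D: "\<And>z. z \<in> ball 0 1 \<Longrightarrow> (G has_field_derivative G' z) (at z)"
    and C: "continuous_on (ball 0 1) G'"
    and r: "0 < r" "r < 1"
    and B: "\<And>\<xi>. norm \<xi> = r \<Longrightarrow> norm (G \<xi>) \<le> M"
    and w: "norm w < r"
  shows "norm (G w) \<le> M"
proof -
  define a where "a = w / of_real r"
  have na: "norm a < 1" using w r by (simp add: a_def norm_divide)
  define \<phi> where "\<phi> z = of_real r * (z + a) / (1 + cnj a * z)" for z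
  define V where "V = {z. norm (cnj a * z) < 1}"
  have oV: "open V" unfolding V_def
    by (intro open_Collect_less continuous_intros)
  have den: "1 + cnj a * z \<noteq> 0" if "z \<in> V" for z
  proof
    assume "1 + cnj a * z = 0"
    then have "cnj a * z = -1" by (metis add.commute eq_neg_iff_add_eq_0)
    with that show False by (simp add: V_def)
  qed
  have cphi: "continuous_on V \<phi>" unfolding \<phi>_def
    by (intro continuous_intros) (use den in auto)
  define U where "U = V \<inter> \<phi> -` ball 0 1"
  have "\<forall>B. open B \<longrightarrow> open (\<phi> -` B \<inter> V)"
    using continuous_on_open_vimage[OF oV, of \<phi>] cphi by simp
  then have oU: "open U" unfolding U_def by (simp add: Int_commute)
  have small: "norm (cnj a * z) < 1" if "norm z \<le> 1" for z
  proof -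
    have "norm a * norm z \<le> norm a * 1"
      by (rule mult_left_mono[OF that norm_ge_zero])
    then show ?thesis using na by (simp add: norm_mult)
  qed
  have pos1: "norm (1 + x) > 0" if "norm x < 1" for x :: complex
  proof -
    have "1 \<le> norm (1 + x) + norm x"
      using norm_triangle_ineq[of "1+x" "-x"] by simp
    then show ?thesis using that by linarith
  qed
  have phin: "norm (\<phi> z) \<le> r" if "norm z \<le> 1" for z
  proof -
    have "(norm a)^2 \<le> 1" using na by (simp add: power_le_one)
    moreover have "(norm z)^2 \<le> 1" using that by (simp add: power_le_one)
    ultimately have "0 \<le> (1 - (norm a)^2) * (1 - (norm z)^2)"
      by (intro mult_nonneg_nonneg) auto
    then have "(norm (z + a))^2 \<le> (norm (1 + cnj a * z))^2"
      using mobius_identity[of a z] by linarith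
    then have le: "norm (z + a) \<le> norm (1 + cnj a * z)"
      using power2_le_imp_le by fastforce
    have p: "norm (1 + cnj a * z) > 0" using pos1 small that by blast
    have "norm (\<phi> z) = r * (norm (z + a) / norm (1 + cnj a * z))"
      using r by (simp add: \<phi>_def norm_mult norm_divide)
    also have "\<dots> \<le> r * 1"
      using le p r by (intro mult_left_mono) (simp_all add: divide_le_eq_1)
    finally show ?thesis by simp
  qed
  have phieq: "norm (\<phi> z) = r" if "norm z = 1" for z
  proof -
    have "(norm (z + a))^2 = (norm (1 + cnj a * z))^2"
      using mobius_identity[of a z] that by simp
    then have e: "norm (z + a) = norm (1 + cnj a * z)"
      using power2_eq_imp_eq by fastforce
    have p: "norm (1 + cnj a * z) > 0" using pos1 small that by simp
    have "norm (\<phi> z) = r * (norm (z + a) / norm (1 + cnj a * z))"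
      using r by (simp add: \<phi>_def norm_mult norm_divide)
    then show ?thesis using e p by simp
  qed
  have sub: "cball 0 1 \<subseteq> U"
  proof
    fix z :: complex assume "z \<in> cball 0 1"
    then have z: "norm z \<le> 1" by simp
    have "norm (cnj a * z) < 1" using small z by blast
    moreover have "norm (\<phi> z) < 1" using phin[OF z] r by simp
    ultimately show "z \<in> U" by (simp add: U_def V_def)
  qed
  obtain \<epsilon> where ep: "\<epsilon> > 0" and epU: "(\<Union>x\<in>cball 0 1. ball x \<epsilon>) \<subseteq> U"
    using compact_subset_open_imp_ball_epsilon_subset[OF compact_cball oU sub] by blast
  have ballU: "ball 0 (1 + \<epsilon>) \<subseteq> U"
  proof
    fix y :: complex assume y: "y \<in> ball 0 (1 + \<epsilon>)"
    define x where "x = (if norm y \<le> 1 then y else y / of_real (norm y))"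
    have "x \<in> cball 0 1" by (simp add: x_def norm_divide)
    moreover have "y \<in> ball x \<epsilon>"
    proof (cases "norm y \<le> 1")
      case True then show ?thesis using ep by (simp add: x_def)
    next
      case False
      then have ny: "norm y > 1" by simp
      have "y - y / of_real (norm y) = y * of_real (1 - 1 / norm y)"
        using ny by (simp add: field_simps)
      then have n1: "norm (y - y / of_real (norm y)) = norm y * abs (1 - 1 / norm y)"
        by (simp only: norm_mult norm_of_real)
      have a1: "abs (1 - 1 / norm y) = 1 - 1 / norm y" using ny by (subst abs_of_nonneg) (simp_all add: divide_le_eq_1)
      have a2: "norm y * (1 - 1 / norm y) = norm y - 1" using ny by (cases "y = 0") (auto simp: right_diff_distrib)
      have "norm (y - y / of_real (norm y)) = norm y - 1" unfolding n1 a1 a2 ..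
      then show ?thesis using False y by (simp add: x_def dist_norm norm_minus_commute)
    qed
    ultimately show "y \<in> U" using epU by blast
  qed
  define H where "H z = G (\<phi> z)" for z
  define dphi where "dphi z = (of_real r * (1 + cnj a * z) - of_real r * (z + a) * cnj a) / ((1 + cnj a * z) * (1 + cnj a * z))" for z
  define H' where "H' z = G' (\<phi> z) * dphi z" for z
  have dphid: "(\<phi> has_field_derivative dphi z) (at z)" if "z \<in> V" for z
  proof -
    have f: "((\<lambda>z. of_real r * (z + a)) has_field_derivative of_real r) (at z)"
      by (auto intro!: derivative_eq_intros)
    have g: "((\<lambda>z. 1 + cnj a * z) has_field_derivative cnj a) (at z)"
      by (auto intro!: derivative_eq_intros)
    from DERIV_divide[OF f g den[OF that]] show ?thesis
      unfolding \<phi>_def dphi_def by simp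
  qed
  have HD: "(H has_field_derivative H' z) (at z)" if "z \<in> ball 0 (1+\<epsilon>)" for z
  proof -
    have "z \<in> U" using ballU that by blast
    then have zV: "z \<in> V" and pz: "\<phi> z \<in> ball 0 1" by (auto simp: U_def)
    show ?thesis unfolding H_def H'_def
      by (rule DERIV_chain2[OF D[OF pz] dphid[OF zV]])
  qed
  have HC: "continuous_on (ball 0 (1+\<epsilon>)) H'"
  proof -
    have sV: "ball 0 (1+\<epsilon>) \<subseteq> V" and sP: "\<phi> ` ball 0 (1+\<epsilon>) \<subseteq> ball 0 1"
      using ballU by (auto simp: U_def)
    have "continuous_on (ball 0 (1+\<epsilon>)) (\<lambda>z. G' (\<phi> z))"
      by (rule continuous_on_compose2[OF C continuous_on_subset[OF cphi sV] sP])
    moreover have "continuous_on (ball 0 (1+\<epsilon>)) dphi"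
      unfolding dphi_def using sV den by (intro continuous_intros) auto
    ultimately show ?thesis unfolding H'_def by (intro continuous_intros)
  qed
  have mv: "integral {0..2*pi} (\<lambda>\<theta>. H (of_real 1 * exp (\<i> * of_real \<theta>))) = 2 * pi * H 0"
    by (rule mean_value[OF HD HC]) (use ep in auto)
  have H0: "H 0 = G w" using r by (simp add: H_def \<phi>_def a_def)
  define e where "e \<theta> = exp (\<i> * complex_of_real \<theta>)" for \<theta>
  have ne: "norm (e \<theta>) = 1" for \<theta> by (simp add: e_def)
  have M0: "0 \<le> M" using B[of "of_real r"] r by (smt (verit) norm_ge_zero norm_of_real)
  have HCc: "continuous_on (ball 0 (1+\<epsilon>)) H"
    using HD by (meson DERIV_isCont continuous_at_imp_continuous_on)
  have ce: "continuous_on (cbox 0 (2*pi)) e" by (auto simp: e_def intro!: continuous_intros)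
  have inb: "e \<theta> \<in> ball 0 (1+\<epsilon>)" for \<theta> using ep ne by simp
  have int: "(\<lambda>\<theta>. H (e \<theta>)) integrable_on cbox 0 (2*pi)"
    by (rule integrable_continuous, rule continuous_on_compose2[OF HCc ce]) (auto intro: inb)
  have hi: "((\<lambda>\<theta>. H (e \<theta>)) has_integral (complex_of_real (2 * pi) * G w)) (cbox 0 (2*pi))"
    using int mv H0 by (simp add: e_def has_integral_integral)
  have bd: "norm (H (e \<theta>)) \<le> M" for \<theta>
    using B phieq ne by (simp add: H_def)
  have "norm (complex_of_real (2 * pi) * G w) \<le> M * (2*pi)"
    using has_integral_bound[OF M0 hi bd] by simp
  then have "2 * pi * norm (G w) \<le> M * (2 * pi)" by (simp add: norm_mult)
  then show ?thesis by simp
qed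


lemma powser_ball:
  fixes c :: "nat \<Rightarrow> complex"
  assumes S: "\<And>z. z \<in> ball 0 1 \<Longrightarrow> summable (\<lambda>k. c k * z^k)"
  shows "\<And>z. z \<in> ball 0 1 \<Longrightarrow> ((\<lambda>z. \<Sum>k. c k * z^k) has_field_derivative (\<Sum>k. diffs c k * z^k)) (at z)"
    and "continuous_on (ball 0 1) (\<lambda>z. \<Sum>k. diffs c k * z^k)"
proof -
  have S': "\<And>z. norm z < 1 \<Longrightarrow> summable (\<lambda>k. c k * z^k)" using S by simp
  show D: "((\<lambda>z. \<Sum>k. c k * z^k) has_field_derivative (\<Sum>k. diffs c k * z^k)) (at z)"
    if "z \<in> ball 0 1" for z
    by (rule termdiffs_strong'[of 1]) (use S' that in auto)
  have S2: "\<And>z. norm z < 1 \<Longrightarrow> summable (\<lambda>k. diffs c k * z^k)"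
    by (rule termdiff_converges[of _ 1]) (use S' in auto)
  have "isCont (\<lambda>z. \<Sum>k. diffs c k * z^k) z" if "z \<in> ball 0 1" for z
    by (rule DERIV_isCont, rule termdiffs_strong'[of 1]) (use S2 that in auto)
  then show "continuous_on (ball 0 1) (\<lambda>z. \<Sum>k. diffs c k * z^k)"
    by (simp add: continuous_at_imp_continuous_on)
qed

lemma dist_real_ge:
  fixes mu :: complex and \<kappa> :: real and n :: nat
  assumes "\<kappa> \<ge> real n" "Re mu < real n"
  shows "norm (mu - of_real \<kappa>) \<ge> norm (mu - of_nat n)"
proof -
  have "(norm (mu - of_nat n))^2 \<le> (norm (mu - of_real \<kappa>))^2"
  proof -
    have "(norm (mu - of_nat n))^2 = (Re mu - real n)^2 + (Im mu)^2" by (simp add: cmod_power2)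
    moreover have "(norm (mu - of_real \<kappa>))^2 = (Re mu - \<kappa>)^2 + (Im mu)^2" by (simp add: cmod_power2)
    moreover have "(real n - Re mu)^2 \<le> (\<kappa> - Re mu)^2"
      using assms by (intro power_mono) auto
    moreover have "(Re mu - real n)^2 = (real n - Re mu)^2" "(Re mu - \<kappa>)^2 = (\<kappa> - Re mu)^2"
      by (simp_all add: power2_commute)
    ultimately show ?thesis by simp
  qed
  then show ?thesis using power2_le_imp_le norm_ge_zero by blast
qed

theorem lemma2:
  fixes n :: nat and mu lam lam1 :: complex and p :: "complex \<Rightarrow> complex"
  assumes "n \<ge> 1"
    and "mu \<noteq> 0" and "Re mu < real n"
    and "0 < norm lam" and "norm lam \<le> 1"
    and "p \<in> Hclass 1 n"
    and "subordinate (\<lambda>z. p z - (1 / mu) * z * deriv p z) (\<lambda>z. 1 + lam * z)"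
    and "norm lam1 = norm lam * norm mu / norm (of_nat n - mu)"
  shows "subordinate p (\<lambda>z. 1 + lam1 * z)"
proof -
  note n1 = assms(1) and mu0 = assms(2) and remu = assms(3) and lampos = assms(4)
  from assms(6) obtain a where a0: "\<forall>k<n. a k = 0"
      and as: "\<forall>z\<in>ball 0 1. (\<lambda>k. a k * z^k) sums (p z - 1)"
      and hol: "p holomorphic_on ball 0 1"
    unfolding Hclass_def by blast
  define g where "g z = p z - 1" for z
  have gs: "g z = (\<Sum>k. a k * z^k)" if "z \<in> ball 0 1" for z
    using as that by (simp add: g_def sums_iff)
  have asum: "summable (\<lambda>k. a k * z^k)" if "z \<in> ball 0 1" for z
    using as that sums_summable by blast
  define g' where "g' z = (\<Sum>k. diffs a k * z^k)" for z
  have gD: "(g has_field_derivative g' z) (at z)" if "z \<in> ball 0 1" for z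
  proof -
    have "((\<lambda>z. \<Sum>k. a k * z^k) has_field_derivative g' z) (at z)"
      unfolding g'_def by (rule powser_ball(1)[OF asum that])
    then show ?thesis
      by (rule has_field_derivative_transform_within_open[where S="ball 0 1"])
         (use that gs in auto)
  qed
  have gcont: "continuous_on (ball 0 1) g"
    using gD by (meson DERIV_isCont continuous_at_imp_continuous_on)
  have pD: "deriv p z = g' z" if "z \<in> ball 0 1" for z
  proof -
    have "p = (\<lambda>z. g z + 1)" by (simp add: g_def)
    moreover have "((\<lambda>z. g z + 1) has_field_derivative g' z) (at z)"
      using gD[OF that] by (auto intro!: derivative_eq_intros)
    ultimately show ?thesis by (simp add: DERIV_imp_deriv)
  qed
  have g0: "g 0 = 0"
  proof -
    have "g 0 = a 0" using gs[of 0] by simp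
    then show ?thesis using a0 n1 by simp
  qed
  define c where "c k = a (k + n)" for k
  define G where "G z = (\<Sum>k. c k * z^k)" for z
  define G' where "G' z = (\<Sum>k. diffs c k * z^k)" for z
  have gG: "summable (\<lambda>k. c k * z^k) \<and> g z = z^n * G z" if "z \<in> ball 0 1" for z
  proof -
    have s1: "(\<lambda>i. a (i + n) * z^(i + n)) sums (g z - (\<Sum>i<n. a i * z^i))"
      using sums_split_initial_segment[OF as[rule_format, OF that]] by (simp add: g_def)
    have "(\<Sum>i<n. a i * z^i) = 0" using a0 by simp
    then have s2: "(\<lambda>i. z^n * (c i * z^i)) sums g z" using s1 by (simp add: c_def power_add mult_ac)
    show ?thesis
    proof (cases "z = 0")
      case True
      have "summable (\<lambda>k. c k * z^k)" using True powser_sums_zero[THEN sums_summable] by simp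
      moreover have "g z = z^n * G z" using True g0 n1 by simp
      ultimately show ?thesis by blast
    next
      case False
      have "(\<lambda>i. inverse (z^n) * (z^n * (c i * z^i))) sums (inverse (z^n) * g z)"
        by (rule sums_mult[OF s2])
      moreover have "inverse (z^n) * (z^n * (c i * z^i)) = c i * z^i" for i
        using False by (simp add: mult.assoc[symmetric])
      ultimately have s3: "(\<lambda>i. c i * z^i) sums (inverse (z^n) * g z)" by simp
      then show ?thesis using False by (simp add: G_def sums_iff)
    qed
  qed
  have GD: "(G has_field_derivative G' z) (at z)" if "z \<in> ball 0 1" for z
    unfolding G_def G'_def using powser_ball(1)[OF _ that] gG by blast
  have GC: "continuous_on (ball 0 1) G'"
    unfolding G'_def using powser_ball(2) gG by blast
  from assms(7) obtain w where w: "\<forall>z\<in>ball 0 1. norm (w z) < 1 \<and>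
      p z - (1 / mu) * z * deriv p z = 1 + lam * w z"
    unfolding subordinate_def by blast
  have qb: "norm (g z - (1 / mu) * z * g' z) < norm lam" if "z \<in> ball 0 1" for z
  proof -
    have "g z - (1 / mu) * z * g' z = lam * w z"
      using w that pD[OF that] by (simp add: g_def algebra_simps)
    moreover have "norm lam * norm (w z) < norm lam * 1"
      using w that lampos by (intro mult_strict_left_mono) auto
    ultimately show ?thesis by (simp add: norm_mult)
  qed
  have nmu: "of_nat n - mu \<noteq> 0" using remu by auto
  define R where "R = norm lam1"
  have Rpos: "R > 0" using lampos mu0 nmu assms(8) by (simp add: R_def)
  have key: "\<forall>z\<in>ball 0 1. norm (g z) < R"
  proof (rule ccontr)
    assume "\<not> (\<forall>z\<in>ball 0 1. norm (g z) < R)"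
    then obtain z1 where z1: "z1 \<in> ball 0 1" "R \<le> norm (g z1)" by (auto simp: not_less)
    define \<rho> where "\<rho> = norm z1"
    have \<rho>1: "\<rho> < 1" using z1 by (simp add: \<rho>_def)
    define K where "K = cball 0 \<rho> \<inter> (\<lambda>z. norm (g z)) -` {R..}"
    have cb: "cball 0 \<rho> \<subseteq> ball 0 1" using \<rho>1 by auto
    have "closed K" unfolding K_def
      by (rule continuous_closed_preimage)
         (auto intro!: continuous_intros continuous_on_subset[OF gcont cb])
    moreover have "bounded K" unfolding K_def by (rule bounded_subset[OF bounded_cball]) auto
    ultimately have cK: "compact K" using compact_eq_bounded_closed by blast
    have z1K: "z1 \<in> K" using z1 by (simp add: K_def \<rho>_def)
    obtain z0 where z0K: "z0 \<in> K" and zmin: "\<And>z. z \<in> K \<Longrightarrow> norm z0 \<le> norm z"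
      using continuous_attains_inf[OF cK _ continuous_on_norm_id] z1K by blast
    define r0 where "r0 = norm z0"
    have r01: "r0 < 1" using z0K \<rho>1 by (simp add: K_def r0_def)
    have z0b: "z0 \<in> ball 0 1" using r01 by (simp add: r0_def)
    have gz0: "R \<le> norm (g z0)" using z0K by (simp add: K_def)
    have z0nz: "z0 \<noteq> 0" using gz0 g0 Rpos by auto
    have r0pos: "r0 > 0" using z0nz by (simp add: r0_def)
    have A: "norm (g z) < R" if "norm z < r0" for z
    proof (rule ccontr)
      assume "\<not> norm (g z) < R"
      then have "z \<in> K" using that z0K by (auto simp: K_def r0_def)
      then show False using zmin that by (simp add: r0_def) (smt (verit) zmin)
    qed
    have B: "norm (g z) \<le> R" if "norm z = r0" for z
    proof -
      have zb: "z \<in> ball 0 1" using that r01 by simp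
      have ic: "isCont g z" using gD[OF zb] DERIV_isCont by blast
      have "((\<lambda>t. complex_of_real t * z) \<longlongrightarrow> complex_of_real 1 * z) (at_left (1::real))"
        by (intro tendsto_intros)
      then have "((\<lambda>t. complex_of_real t * z) \<longlongrightarrow> z) (at_left (1::real))" by simp
      from tendsto_norm[OF isCont_tendsto_compose[OF ic this]]
      have lim: "((\<lambda>t. norm (g (of_real t * z))) \<longlongrightarrow> norm (g z)) (at_left (1::real))" .
      have ev: "eventually (\<lambda>t. norm (g (of_real t * z)) \<le> R) (at_left (1::real))"
      proof -
        have "eventually (\<lambda>t. t \<in> {0<..<1}) (at_left (1::real))"
          by (rule eventually_at_left_real) simp
        then show ?thesis
        proof (rule eventually_mono)
          fix t :: real assume t: "t \<in> {0<..<1}"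
          have "norm (of_real t * z) < r0" using t that r0pos by (simp add: norm_mult)
          then show "norm (g (of_real t * z)) \<le> R" using A by fastforce
        qed
      qed
      show ?thesis by (rule tendsto_upperbound[OF lim ev]) simp
    qed
    have gX: "norm (g z0) = R" using B[of z0] gz0 by (simp add: r0_def)
    have C: "norm (G \<zeta>) \<le> R / r0^n" if "norm \<zeta> = r0" for \<zeta>
    proof -
      have zb: "\<zeta> \<in> ball 0 1" using that r01 by simp
      have "r0^n * norm (G \<zeta>) = norm (g \<zeta>)"
        using gG[OF zb] that by (simp add: norm_mult norm_power)
      also have "\<dots> \<le> R" using B[OF that] .
      finally show ?thesis using r0pos by (simp add: pos_le_divide_eq mult.commute)
    qed
    have D: "norm (G \<zeta>) \<le> R / r0^n" if "norm \<zeta> < r0" for \<zeta>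
      by (rule max_principle[OF GD GC r0pos r01 C that])
    have E: "norm (g (of_real t * z0)) \<le> t^n * R" if "0 < t" "t < 1" for t
    proof -
      have nz: "norm (of_real t * z0) = t * r0" using that by (simp add: norm_mult r0_def)
      have lt: "norm (of_real t * z0) < r0" using nz that r0pos by simp
      then have zb: "of_real t * z0 \<in> ball 0 1" using r01 by simp
      have "norm (g (of_real t * z0)) = (t * r0)^n * norm (G (of_real t * z0))"
        using gG[OF zb] nz by (simp add: norm_mult norm_power)
      also have "\<dots> \<le> (t * r0)^n * (R / r0^n)"
        using D[OF lt] that r0pos by (intro mult_left_mono) auto
      also have "\<dots> = t^n * R" using r0pos by (simp add: power_mult_distrib)
      finally show ?thesis .
    qed
    define X where "X = g z0"
    define E where "E = cnj X * (g' z0 * z0)"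
    have XX: "Re (cnj X * X) = R^2"
    proof -
      have "cnj X * X = complex_of_real ((norm X)^2)" by (simp only: complex_norm_square mult.commute)
      then show ?thesis using gX by (simp add: X_def)
    qed
    have nX: "norm X = R" using gX by (simp add: X_def)
    have rad: "Re E \<ge> R^2 * real n"
    proof (rule ccontr)
      assume neg: "\<not> Re E \<ge> R^2 * real n"
      define F where "F t = Re (cnj X * g (of_real t * z0)) - R^2 * t^n" for t :: real
      have d0: "(g has_field_derivative g' z0) (at (of_real 1 * z0))" using gD[OF z0b] by simp
      have d1: "((\<lambda>s. s * z0) has_field_derivative z0) (at (of_real 1))"
        by (auto intro!: derivative_eq_intros)
      have d2: "((\<lambda>s. cnj X * g (s * z0)) has_field_derivative cnj X * (g' z0 * z0)) (at (of_real 1))"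
        by (rule DERIV_cmult[OF DERIV_chain2[OF d0 d1]])
      have d3: "((\<lambda>t. cnj X * g (of_real t * z0)) has_vector_derivative cnj X * (g' z0 * z0)) (at 1)"
        using has_vector_derivative_real_field[OF d2, where s=UNIV] by simp
      have d4: "((\<lambda>t. R^2 * t^n) has_real_derivative R^2 * real n) (at 1)"
        by (auto intro!: derivative_eq_intros)
      have FD: "(F has_real_derivative (Re E - R^2 * real n)) (at 1)"
        unfolding F_def E_def by (rule DERIV_diff[OF has_field_derivative_Re[OF d3] d4])
      from DERIV_neg_dec_left[OF FD] neg obtain d where d: "d > 0"
        and dd: "\<And>h. h > 0 \<Longrightarrow> h < d \<Longrightarrow> F 1 < F (1 - h)" by auto
      define h where "h = min (d/2) (1/2)"
      have h: "h > 0" "h < d" "h < 1" using d by (auto simp: h_def)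
      have F1: "F 1 = 0" using XX by (simp add: F_def X_def)
      have "Re (cnj X * g (of_real (1 - h) * z0)) \<le> norm (cnj X * g (of_real (1 - h) * z0))"
        by (rule complex_Re_le_cmod)
      also have "\<dots> = R * norm (g (of_real (1 - h) * z0))" by (simp add: norm_mult nX)
      also have "\<dots> \<le> R * ((1 - h)^n * R)"
        using E[of "1 - h"] h Rpos by (intro mult_left_mono) auto
      finally have "F (1 - h) \<le> 0" by (simp add: F_def power2_eq_square mult_ac)
      with dd[OF h(1) h(2)] F1 show False by simp
    qed
    have tan: "Im E = 0"
    proof -
      define T where "T \<theta> = Re (cnj X * g (exp (\<i> * of_real \<theta>) * z0))" for \<theta> :: real
      have d0: "(g has_field_derivative g' z0) (at (exp (\<i> * of_real 0) * z0))" using gD[OF z0b] by simp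
      have d1: "((\<lambda>s. exp (\<i> * s) * z0) has_field_derivative \<i> * z0) (at (of_real 0))"
        by (auto intro!: derivative_eq_intros)
      have d2: "((\<lambda>s. cnj X * g (exp (\<i> * s) * z0)) has_field_derivative cnj X * (g' z0 * (\<i> * z0))) (at (of_real 0))"
        by (rule DERIV_cmult[OF DERIV_chain2[OF d0 d1]])
      have d3: "((\<lambda>t. cnj X * g (exp (\<i> * of_real t) * z0)) has_vector_derivative cnj X * (g' z0 * (\<i> * z0))) (at 0)"
        using has_vector_derivative_real_field[OF d2, where s=UNIV] by simp
      have TD: "(T has_real_derivative Re (cnj X * (g' z0 * (\<i> * z0)))) (at 0)"
        unfolding T_def by (rule has_field_derivative_Re[OF d3])
      have T0: "T 0 = R^2" using XX by (simp add: T_def X_def)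
      have Tle: "T y \<le> T 0" for y
      proof -
        have nz: "norm (exp (\<i> * of_real y) * z0) = r0" by (simp add: norm_mult r0_def)
        have "T y \<le> norm (cnj X * g (exp (\<i> * of_real y) * z0))"
          unfolding T_def by (rule complex_Re_le_cmod)
        also have "\<dots> = R * norm (g (exp (\<i> * of_real y) * z0))" by (simp add: norm_mult nX)
        also have "\<dots> \<le> R * R" using B[OF nz] Rpos by (intro mult_left_mono) auto
        finally show ?thesis using T0 by (simp add: power2_eq_square)
      qed
      have "Re (cnj X * (g' z0 * (\<i> * z0))) = 0"
        by (rule DERIV_local_max[OF TD zero_less_one]) (use Tle in auto)
      moreover have "Re (cnj X * (g' z0 * (\<i> * z0))) = - Im E"
        unfolding E_def by (simp add: mult_ac)
      ultimately show ?thesis by simp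
    qed
    define \<kappa> where "\<kappa> = Re E / R^2"
    have kn: "\<kappa> \<ge> real n" using rad Rpos by (simp add: \<kappa>_def pos_le_divide_eq mult.commute)
    have Ereal: "E = complex_of_real (Re E)" using tan by (simp add: complex_eq_iff)
    have XcX: "X * cnj X = complex_of_real (R^2)"
      using nX by (simp only: complex_norm_square[symmetric])
    have Y: "g' z0 * z0 = X * complex_of_real \<kappa>"
    proof -
      have "X * E = complex_of_real (R^2) * (g' z0 * z0)"
        unfolding E_def XcX[symmetric] by (simp add: mult_ac)
      then have "X * complex_of_real (Re E) = complex_of_real (R^2) * (g' z0 * z0)"
        using Ereal by simp
      then show ?thesis using Rpos by (simp add: \<kappa>_def field_simps)
    qed
    have "X - (1 / mu) * z0 * g' z0 = X * (mu - complex_of_real \<kappa>) / mu"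
      using Y mu0 by (simp add: field_simps)
    then have "norm (g z0 - (1 / mu) * z0 * g' z0) = R * norm (mu - complex_of_real \<kappa>) / norm mu"
      by (simp add: X_def norm_mult norm_divide nX[unfolded X_def])
    also have "\<dots> \<ge> R * norm (mu - of_nat n) / norm mu"
      using dist_real_ge[OF kn remu] Rpos mu0
      by (intro divide_right_mono mult_left_mono) auto
    also have "R * norm (mu - of_nat n) / norm mu = norm lam"
      using assms(8) nmu mu0 by (simp add: R_def norm_minus_commute)
    finally have "norm lam \<le> norm (g z0 - (1 / mu) * z0 * g' z0)" .
    with qb[OF z0b] show False by simp
  qed
  have lam10: "lam1 \<noteq> 0" using Rpos R_def by auto
  show ?thesis
    unfolding subordinate_def
  proof (intro exI[of _ "\<lambda>z. (p z - 1) / lam1"] conjI ballI)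
    show "(\<lambda>z. (p z - 1) / lam1) holomorphic_on ball 0 1"
      using lam10 by (intro holomorphic_intros hol) auto
    show "(p 0 - 1) / lam1 = 0" using g0 by (simp add: g_def)
    fix z :: complex assume z: "z \<in> ball 0 1"
    show "norm ((p z - 1) / lam1) < 1"
      using key z Rpos by (simp add: g_def R_def norm_divide)
    show "p z = 1 + lam1 * ((p z - 1) / lam1)" using lam10 by simp
  qed
qed


end
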